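(* The Petersen graph has, for no vertex $v$, two (nor three) level-disjoint partitions rooted in $v$ of optimal height, where optimal height for $k$ partitions in this non-bipartite graph means maximal height equal to $\mathrm{ecc}(v)+k-1=k+1$.
   Context: For $S\subseteq V(G)$, $N(S)$ is the set of vertices adjacent to some vertex of $S$. A level partition of $G$ is a tuple $\mathcal{S}=(S_0,\dots,S_h)$ of pairwise disjoint sets with union $V(G)$ such that $S_i\subseteq N(S_{i-1})$ for $1\le i\le h$; $h$ is its height; it is rooted in $v$ if $S_0=\{v\}$. Level partitions are level-disjoint if for every two of them $\mathcal{S},\mathcal{T}$, $S_i\cap T_i=\emptyset$ for every $1\le i\le\min$ of their heights. The Petersen graph is 3-regular, vertex-transitive, non-bipartite, of girth 5, with every vertex of eccentricity 2. *)

theory Defs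
  imports Main
begin

(* A graph is given by a vertex set V and a symmetric irreflexive adjacency relation E. *)

definition nbhd :: "('a \<Rightarrow> 'a \<Rightarrow> bool) \<Rightarrow> 'a set \<Rightarrow> 'a set" where
  "nbhd E S = {y. \<exists>x\<in>S. E x y}"

definition height :: "'a set list \<Rightarrow> nat" where
  "height Ss = length Ss - 1"

definition level_partition :: "'a set \<Rightarrow> ('a \<Rightarrow> 'a \<Rightarrow> bool) \<Rightarrow> 'a set list \<Rightarrow> bool" where
  "level_partition V E Ss \<longleftrightarrow>
     Ss \<noteq> [] \<and>
     (\<forall>i<length Ss. \<forall>j<length Ss. i \<noteq> j \<longrightarrow> Ss ! i \<inter> Ss ! j = {}) \<and>
     (\<Union>(set Ss)) = V \<and>
     (\<forall>i. 1 \<le> i \<and> i \<le> height Ss \<longrightarrow> Ss ! i \<subseteq> nbhd E (Ss ! (i - 1)))"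

definition rooted_in :: "'a \<Rightarrow> 'a set list \<Rightarrow> bool" where
  "rooted_in v Ss \<longleftrightarrow> Ss \<noteq> [] \<and> Ss ! 0 = {v}"

definition level_disjoint :: "'a set list list \<Rightarrow> bool" where
  "level_disjoint Ps \<longleftrightarrow>
     (\<forall>p<length Ps. \<forall>q<length Ps. p \<noteq> q \<longrightarrow>
        (\<forall>i. 1 \<le> i \<and> i \<le> min (height (Ps ! p)) (height (Ps ! q)) \<longrightarrow>
             (Ps ! p) ! i \<inter> (Ps ! q) ! i = {}))"

definition gdist :: "('a \<Rightarrow> 'a \<Rightarrow> bool) \<Rightarrow> 'a \<Rightarrow> 'a \<Rightarrow> nat" where
  "gdist E u w = (LEAST n. (E ^^ n) u w)"

definition ecc :: "'a set \<Rightarrow> ('a \<Rightarrow> 'a \<Rightarrow> bool) \<Rightarrow> 'a \<Rightarrow> nat" where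
  "ecc V E v = Max (gdist E v ` V)"

(* Petersen graph on {0..9}: outer 5-cycle 0..4, spokes i -- i+5, inner pentagram *)
definition petersen_V :: "nat set" where
  "petersen_V = {0..<10}"

definition petersen_E :: "nat \<Rightarrow> nat \<Rightarrow> bool" where
  "petersen_E x y \<longleftrightarrow> x \<in> petersen_V \<and> y \<in> petersen_V \<and>
     (\<exists>i<5. {x, y} = {i, (i + 1) mod 5} \<or> {x, y} = {i, i + 5}
            \<or> {x, y} = {i + 5, (i + 2) mod 5 + 5})"

end

theory Submission
  imports Defs
begin
definition nb :: "nat \<Rightarrow> nat set" where
"nb x = (if x=0 then {1,4,5} else if x=1 then {0,2,6} else if x=2 then {1,3,7}
 else if x=3 then {2,4,8} else if x=4 then {3,0,9} else if x=5 then {0,7,8}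
 else if x=6 then {1,8,9} else if x=7 then {2,5,9} else if x=8 then {3,5,6}
 else if x=9 then {4,6,7} else {})"

lemma dbl: "{x, y} = {a, b::nat} \<Longrightarrow> (x = a \<and> y = b) \<or> (x = b \<and> y = a)"
  by (auto simp: doubleton_eq_iff)
lemma E_nb1: "petersen_E x y \<Longrightarrow> y \<in> nb x"
proof -
  assume "petersen_E x y"
  then have ex: "\<exists>i<5. {x, y} = {i, (i + 1) mod 5} \<or> {x, y} = {i, i + 5}
            \<or> {x, y} = {i + 5, (i + 2) mod 5 + 5}" unfolding petersen_E_def by (elim conjE)
  then obtain i where i: "i < 5" "{x, y} = {i, (i + 1) mod 5} \<or> {x, y} = {i, i + 5}
            \<or> {x, y} = {i + 5, (i + 2) mod 5 + 5}" by (elim exE conjE)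
  have "i = 0 \<or> i = 1 \<or> i = 2 \<or> i = 3 \<or> i = 4" using i(1) by arith
  then show ?thesis using i(2)
    apply (elim disjE)
    apply simp_all
    apply (drule dbl, elim disjE conjE, simp_all add: nb_def)+
    done
qed
lemma ex5: "(\<exists>i<(5::nat). P i) \<longleftrightarrow> P 0 \<or> P 1 \<or> P 2 \<or> P 3 \<or> P 4"
  by (auto simp: less_Suc_eq numeral_eq_Suc)
lemma E_nb2: "y \<in> nb x \<Longrightarrow> petersen_E x y"
  unfolding nb_def
  apply (simp split: if_splits)
  apply (elim disjE conjE)
  apply (simp_all add: petersen_E_def petersen_V_def ex5 doubleton_eq_iff)
  apply auto
  done

lemma all10: "(\<forall>i<(10::nat). P i) \<longleftrightarrow> P 0 \<and> P 1 \<and> P 2 \<and> P 3 \<and> P 4 \<and> P 5 \<and> P 6 \<and> P 7 \<and> P 8 \<and> P 9"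
proof
  assume "\<forall>i<(10::nat). P i" then show "P 0 \<and> P 1 \<and> P 2 \<and> P 3 \<and> P 4 \<and> P 5 \<and> P 6 \<and> P 7 \<and> P 8 \<and> P 9" by simp
next
  assume h: "P 0 \<and> P 1 \<and> P 2 \<and> P 3 \<and> P 4 \<and> P 5 \<and> P 6 \<and> P 7 \<and> P 8 \<and> P 9"
  show "\<forall>i<(10::nat). P i"
  proof (intro allI impI)
    fix i :: nat assume "i < 10"
    then have "i = 0 \<or> i = 1 \<or> i = 2 \<or> i = 3 \<or> i = 4 \<or> i = 5 \<or> i = 6 \<or> i = 7 \<or> i = 8 \<or> i = 9" by arith
    then show "P i" using h by (elim disjE) simp_all
  qed
qed

lemma nb_lt0: "y \<in> nb x \<Longrightarrow> x < 10"
  by (auto simp: nb_def split: if_splits)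

lemma E_nb: "petersen_E x y \<longleftrightarrow> x < 10 \<and> y \<in> nb x"
proof
  assume h: "petersen_E x y"
  show "x < 10 \<and> y \<in> nb x" using E_nb1[OF h] nb_lt0[OF E_nb1[OF h]] by simp
next
  assume "x < 10 \<and> y \<in> nb x"
  then show "petersen_E x y" using E_nb2 by simp
qed

lemma graph_fact: "\<forall>v<10. \<forall>a\<in>nb v. a \<noteq> v \<and> (\<forall>x\<in>nb a. x = v \<or> (x \<notin> nb v \<and> x \<noteq> v \<and> (\<forall>y\<in>nb x. y \<in> nb v \<longrightarrow> y = a)))"
  unfolding all10 by (simp add: nb_def)

lemma dist2: "\<forall>v<10. \<forall>w<10. v = w \<or> w \<in> nb v \<or> (\<exists>y\<in>nb v. w \<in> nb y)"
  unfolding all10 by (simp add: nb_def)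

lemma lp_disj: "level_partition V E Q \<Longrightarrow> i < length Q \<Longrightarrow> j < length Q \<Longrightarrow> x \<in> Q!i \<Longrightarrow> x \<in> Q!j \<Longrightarrow> i = j"
  unfolding level_partition_def by blast

lemma lp_step: "level_partition V E Q \<Longrightarrow> 1 \<le> i \<Longrightarrow> i < length Q \<Longrightarrow> x \<in> Q!i \<Longrightarrow> \<exists>y\<in>Q!(i-1). E y x"
  unfolding level_partition_def height_def nbhd_def by fastforce

lemma lp_union: "level_partition V E Q \<Longrightarrow> x \<in> V \<Longrightarrow> \<exists>i<length Q. x \<in> Q!i"
  unfolding level_partition_def by (metis UnionE in_set_conv_nth)

lemma nb_sym: "x < 10 \<Longrightarrow> y \<in> nb x \<Longrightarrow> x \<in> nb y \<and> y < 10"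
  by (auto simp: nb_def split: if_splits)

lemma nb_lt: "y \<in> nb x \<Longrightarrow> x < 10"
  by (auto simp: nb_def split: if_splits)

lemma key:
  assumes lp: "level_partition petersen_V petersen_E Q" and r: "rooted_in v Q"
    and v: "v < 10" and a: "a \<in> nb v" and na: "1 < length Q \<Longrightarrow> a \<notin> Q!1"
  shows "\<exists>i. 4 \<le> i \<and> i < length Q \<and> a \<in> Q!i"
proof -
  have q0: "Q!0 = {v}" using r unfolding rooted_in_def by simp
  have a10: "a < 10" using nb_sym[OF v a] by simp
  have "a \<in> petersen_V" using a10 unfolding petersen_V_def by simp
  then obtain i where i: "i < length Q" "a \<in> Q!i" using lp_union[OF lp] by blast
  have gfa: "\<forall>a\<in>nb v. a \<noteq> v \<and> (\<forall>x\<in>nb a. x = v \<or> (x \<notin> nb v \<and> x \<noteq> v \<and> (\<forall>y\<in>nb x. y \<in> nb v \<longrightarrow> y = a)))"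
    using graph_fact v by simp
  have gf1: "a \<noteq> v" using gfa a by simp
  have gf2: "\<And>x. x \<in> nb a \<Longrightarrow> x \<noteq> v \<Longrightarrow> x \<notin> nb v \<and> (\<forall>y\<in>nb x. y \<in> nb v \<longrightarrow> y = a)"
    using gfa a by blast
  have Enb: "\<And>x y. petersen_E x y \<Longrightarrow> x \<in> nb y"
  proof -
    fix x y assume "petersen_E x y"
    then have "x < 10" "y \<in> nb x" using E_nb by simp_all
    then show "x \<in> nb y" using nb_sym[of x y] by simp
  qed
  have q1: "\<And>x. 1 < length Q \<Longrightarrow> x \<in> Q!1 \<Longrightarrow> x \<in> nb v"
  proof -
    fix x assume h: "1 < length Q" "x \<in> Q!1"
    obtain y where "y \<in> Q!0" "petersen_E y x" using lp_step[OF lp _ h(1) h(2)] by auto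
    then have "petersen_E v x" using q0 by simp
    then show "x \<in> nb v" using E_nb by simp
  qed
  have vnot: "\<And>j. j < length Q \<Longrightarrow> v \<in> Q!j \<Longrightarrow> j = 0"
  proof -
    fix j assume h: "j < length Q" "v \<in> Q!j"
    have "0 < length Q" using h(1) by linarith
    moreover have "v \<in> Q!0" using q0 by simp
    ultimately show "j = 0" using lp_disj[OF lp h(1) _ h(2)] by blast
  qed
  have "i \<noteq> 0"
  proof
    assume "i = 0"
    then have "a \<in> {v}" using i(2) q0 by simp
    then show False using gf1 by simp
  qed
  moreover have "i \<noteq> 1"
  proof
    assume "i = 1"
    then show False using i na by simp
  qed
  moreover have "i \<noteq> 2"
  proof
    assume i2: "i = 2"
    then obtain x where x: "x \<in> Q!1" "petersen_E x a" using lp_step[OF lp, of 2 a] i by auto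
    have xa: "x \<in> nb a" using Enb[OF x(2)] .
    have l1: "1 < length Q" using i i2 by simp
    have "x \<noteq> v" using vnot[OF l1] x(1) by auto
    then have "x \<notin> nb v" using gf2[OF xa] by simp
    then show False using q1[OF l1 x(1)] by simp
  qed
  moreover have "i \<noteq> 3"
  proof
    assume i3: "i = 3"
    then obtain x where x: "x \<in> Q!2" "petersen_E x a" using lp_step[OF lp, of 3 a] i by auto
    have xa: "x \<in> nb a" using Enb[OF x(2)] .
    have l2: "2 < length Q" using i i3 by simp
    have "x \<noteq> v" using vnot[OF l2] x(1) by auto
    then have g: "\<forall>y\<in>nb x. y \<in> nb v \<longrightarrow> y = a" using gf2[OF xa] by simp
    obtain y where y: "y \<in> Q!1" "petersen_E y x" using lp_step[OF lp, of 2 x] x(1) l2 by auto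
    have yx: "y \<in> nb x" using Enb[OF y(2)] .
    have l1: "1 < length Q" using l2 by simp
    have "y \<in> nb v" using q1[OF l1 y(1)] .
    then have "y = a" using g yx by simp
    then show False using na[OF l1] y(1) by simp
  qed
  ultimately have "4 \<le> i" by simp
  then show ?thesis using i by blast
qed

lemma ecc_le: "v \<in> petersen_V \<Longrightarrow> ecc petersen_V petersen_E v \<le> 2"
  unfolding ecc_def
proof (subst Max_le_iff)
  assume v: "v \<in> petersen_V"
  show "finite (gdist petersen_E v ` petersen_V)" by (simp add: petersen_V_def)
  show "gdist petersen_E v ` petersen_V \<noteq> {}" using v by auto
  show "\<forall>a\<in>gdist petersen_E v ` petersen_V. a \<le> 2"
  proof
    fix d assume "d \<in> gdist petersen_E v ` petersen_V"
    then obtain w where w: "w \<in> petersen_V" "d = gdist petersen_E v w" by auto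
    have "\<exists>n\<le>2. (petersen_E ^^ n) v w"
    proof -
      have "v = w \<or> w \<in> nb v \<or> (\<exists>y\<in>nb v. w \<in> nb y)" using dist2 v w unfolding petersen_V_def by auto
      then show ?thesis
      proof (elim disjE)
        assume "v = w" then show ?thesis by (intro exI[of _ 0]) auto
      next
        assume "w \<in> nb v" then show ?thesis using v unfolding petersen_V_def
          by (intro exI[of _ 1]) (auto simp: E_nb)
      next
        assume "\<exists>y\<in>nb v. w \<in> nb y"
        then obtain y where "y \<in> nb v" "w \<in> nb y" by auto
        then have "petersen_E v y" "petersen_E y w" using v nb_sym[of v y] unfolding petersen_V_def
          by (auto simp: E_nb)
        then have "(petersen_E ^^ 2) v w" by (auto simp: numeral_2_eq_2 relcompp.intros)
        then show ?thesis by blast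
      qed
    qed
    then obtain n where "n \<le> 2" "(petersen_E ^^ n) v w" by auto
    then show "d \<le> 2" unfolding w gdist_def by (meson Least_le order_trans)
  qed
qed

lemma nonempty_down: "level_partition V E Q \<Longrightarrow> i < length Q \<Longrightarrow> x \<in> Q!i \<Longrightarrow> j \<le> i \<Longrightarrow> Q!j \<noteq> {}"
proof (induction i arbitrary: x)
  case 0 then show ?case by auto
next
  case (Suc i)
  show ?case
  proof (cases "j = Suc i")
    case True then show ?thesis using Suc by auto
  next
    case False
    obtain y where "y \<in> Q!i" using lp_step[OF Suc.prems(1), of "Suc i" x] Suc.prems by auto
    then show ?thesis using Suc False by auto
  qed
qed

lemma has_level1:
  assumes lp: "level_partition petersen_V petersen_E Q" and r: "rooted_in v Q" and v: "v \<in> petersen_V"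
  shows "1 < length Q \<and> Q!1 \<noteq> {} \<and> Q!1 \<subseteq> nb v \<and> 1 \<le> height Q"
proof -
  have q0: "Q!0 = {v}" using r unfolding rooted_in_def by auto
  obtain u where u: "u \<in> petersen_V" "u \<noteq> v" using v unfolding petersen_V_def
    by (intro that[of "if v = 0 then 1 else 0"]) (auto simp: petersen_V_def)
  obtain i where i: "i < length Q" "u \<in> Q!i" using lp_union[OF lp u(1)] by auto
  have "i \<noteq> 0"
  proof
    assume "i = 0"
    then have "u \<in> {v}" using i(2) q0 by simp
    then show False using u(2) by simp
  qed
  then have l1: "1 < length Q" using i(1) by linarith
  have "1 \<le> i" using \<open>i \<noteq> 0\<close> by linarith
  then have ne: "Q!1 \<noteq> {}" using nonempty_down[OF lp i(1) i(2)] by blast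
  have "Q!1 \<subseteq> nb v"
  proof
    fix x assume x: "x \<in> Q!1"
    obtain y where "y \<in> Q!0" "petersen_E y x" using lp_step[OF lp _ l1 x] by auto
    then have "petersen_E v x" using q0 by simp
    then show "x \<in> nb v" using E_nb by simp
  qed
  show ?thesis using l1 ne \<open>Q!1 \<subseteq> nb v\<close> by (simp add: height_def)
qed

theorem mainTheorem8:
  assumes "v \<in> petersen_V" and "k \<in> {2, 3}"
  shows "\<not> (\<exists>Ps. length Ps = k \<and>
              (\<forall>P\<in>set Ps. level_partition petersen_V petersen_E P \<and> rooted_in v P) \<and>
              level_disjoint Ps \<and>
              Max (height ` set Ps) = ecc petersen_V petersen_E v + k - 1)"
proof
  assume "\<exists>Ps. length Ps = k \<and>
              (\<forall>P\<in>set Ps. level_partition petersen_V petersen_E P \<and> rooted_in v P) \<and>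
              level_disjoint Ps \<and>
              Max (height ` set Ps) = ecc petersen_V petersen_E v + k - 1"
  then obtain Ps where len: "length Ps = k"
    and lp: "\<And>P. P \<in> set Ps \<Longrightarrow> level_partition petersen_V petersen_E P \<and> rooted_in v P"
    and ld: "level_disjoint Ps"
    and mx: "Max (height ` set Ps) = ecc petersen_V petersen_E v + k - 1" by blast
  have v10: "v < 10" using assms(1) by (simp add: petersen_V_def)
  have hle: "\<And>P. P \<in> set Ps \<Longrightarrow> height P \<le> k + 1"
  proof -
    fix P assume "P \<in> set Ps"
    then have "height P \<le> Max (height ` set Ps)" by simp
    then show "height P \<le> k + 1" using mx ecc_le[OF assms(1)] by linarith
  qed
  have mem: "\<And>p. p < k \<Longrightarrow> Ps!p \<in> set Ps" using len by auto
  note H = has_level1[OF _ _ assms(1)]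
  have P0: "level_partition petersen_V petersen_E (Ps!0)" "rooted_in v (Ps!0)"
    using lp mem[of 0] assms(2) by auto
  obtain a where a: "a \<in> Ps!0!1" using H[OF P0] by auto
  have anb: "a \<in> nb v" using H[OF P0] a by auto
  have notin: "\<And>q. 0 < q \<Longrightarrow> q < k \<Longrightarrow> \<exists>i. 4 \<le> i \<and> i < length (Ps!q) \<and> a \<in> Ps!q!i"
  proof -
    fix q assume q: "0 < q" "q < k"
    have Pq: "level_partition petersen_V petersen_E (Ps!q)" "rooted_in v (Ps!q)" using lp mem[OF q(2)] by auto
    have "a \<notin> Ps!q!1"
    proof -
      have "Ps!0!1 \<inter> Ps!q!1 = {}"
        using ld[unfolded level_disjoint_def, rule_format, of 0 q 1] q len H[OF P0] H[OF Pq] by auto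
      then show ?thesis using a by auto
    qed
    then show "\<exists>i. 4 \<le> i \<and> i < length (Ps!q) \<and> a \<in> Ps!q!i"
      using key[OF Pq v10 anb] by blast
  qed
  show False
  proof (cases "k = 2")
    case True
    obtain i where "4 \<le> i" "i < length (Ps!1)" using notin[of 1] True by auto
    moreover have "height (Ps!1) \<le> 3" using hle[OF mem[of 1]] True by auto
    ultimately show False by (simp add: height_def)
  next
    case False
    then have k3: "k = 3" using assms(2) by auto
    obtain i where i: "4 \<le> i" "i < length (Ps!1)" "a \<in> Ps!1!i" using notin[of 1] k3 by auto
    obtain j where j: "4 \<le> j" "j < length (Ps!2)" "a \<in> Ps!2!j" using notin[of 2] k3 by auto
    have "height (Ps!1) \<le> 4" "height (Ps!2) \<le> 4" using hle mem k3 by auto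
    then have "i = 4" "j = 4" "height (Ps!1) = 4" "height (Ps!2) = 4" using i j by (auto simp: height_def)
    then have "Ps!1!4 \<inter> Ps!2!4 = {}"
      using ld[unfolded level_disjoint_def, rule_format, of 1 2 4] len k3 by auto
    then show False using i j \<open>i = 4\<close> \<open>j = 4\<close> by auto
  qed
qed
end
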